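(* Let $D$ be a Dedekind domain with quotient field $K$, $M$ a maximal ideal of $D$ of finite index, $\hat D$ the $M$-adic completion of $D$, $n\ge1$, and $C\in M_n(\hat D)$. Then $\{f(C)\mid f\in\mathrm{Int}_K(M_n(D))\}\subseteq \hat D[C]=\{s(C)\mid s\in\hat D[x]\}$.
   Context: $\mathrm{Int}_K(M_n(D))=\{f\in K[x]\mid f(C)\in M_n(D)\text{ for all }C\in M_n(D)\}$. For $f=g/d$ with $g\in D[x]$, $d\in D\setminus\{0\}$ and $C\in M_n(\hat D)$, $f(C)=d^{-1}g(C)$ computed over the quotient field of $\hat D$. *)

theory Defs
  imports "HOL-Analysis.Analysis" "HOL-Computational_Algebra.Fraction_Field"
    "HOL-Computational_Algebra.Polynomial_Factorial"
begin

definition is_ideal :: "'a::comm_ring_1 set \<Rightarrow> bool" where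
  "is_ideal I \<longleftrightarrow> 0 \<in> I \<and> (\<forall>x\<in>I. \<forall>y\<in>I. x + y \<in> I) \<and> (\<forall>r. \<forall>x\<in>I. r * x \<in> I)"

definition is_prime_ideal :: "'a::comm_ring_1 set \<Rightarrow> bool" where
  "is_prime_ideal P \<longleftrightarrow> is_ideal P \<and> P \<noteq> UNIV \<and> (\<forall>a b. a * b \<in> P \<longrightarrow> a \<in> P \<or> b \<in> P)"

definition is_maximal_ideal :: "'a::comm_ring_1 set \<Rightarrow> bool" where
  "is_maximal_ideal M \<longleftrightarrow> is_ideal M \<and> M \<noteq> UNIV \<and>
     (\<forall>J. is_ideal J \<and> M \<subseteq> J \<longrightarrow> J = M \<or> J = UNIV)"

text \<open>Finite index: the quotient ring D/M (the set of cosets x + M) is finite.\<close>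
definition finite_index :: "'a::comm_ring_1 set \<Rightarrow> bool" where
  "finite_index M \<longleftrightarrow> finite ((\<lambda>x. (\<lambda>m. x + m) ` M) ` UNIV)"

definition ideal_prod :: "'a::comm_ring_1 set \<Rightarrow> 'a set \<Rightarrow> 'a set" where
  "ideal_prod I J = {x. \<exists>(m::nat) f g. (\<forall>i<m. f i \<in> I \<and> g i \<in> J) \<and> x = (\<Sum>i<m. f i * g i)}"

fun ideal_pow :: "'a::comm_ring_1 set \<Rightarrow> nat \<Rightarrow> 'a set" where
  "ideal_pow M 0 = UNIV"
| "ideal_pow M (Suc k) = ideal_prod M (ideal_pow M k)"

definition noetherian_ring :: "'a::comm_ring_1 itself \<Rightarrow> bool" where
  "noetherian_ring _ \<longleftrightarrow> (\<forall>I :: nat \<Rightarrow> 'a set. (\<forall>i. is_ideal (I i) \<and> I i \<subseteq> I (Suc i))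
      \<longrightarrow> (\<exists>N. \<forall>i\<ge>N. I i = I N))"

definition integral_over_dom :: "'a::idom fract \<Rightarrow> bool" where
  "integral_over_dom x \<longleftrightarrow> (\<exists>p :: 'a poly. lead_coeff p = 1 \<and> poly (map_poly to_fract p) x = 0)"

definition integrally_closed :: "'a::idom itself \<Rightarrow> bool" where
  "integrally_closed _ \<longleftrightarrow> (\<forall>x :: 'a fract. integral_over_dom x \<longrightarrow> x \<in> range to_fract)"

definition dedekind_domain :: "'a::idom itself \<Rightarrow> bool" where
  "dedekind_domain T \<longleftrightarrow> noetherian_ring T \<and> integrally_closed T \<and>
     (\<forall>P :: 'a set. is_prime_ideal P \<and> P \<noteq> {0} \<longrightarrow> is_maximal_ideal P)"

fun matpow :: "'a::comm_ring_1^'n^'n \<Rightarrow> nat \<Rightarrow> 'a^'n^'n" where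
  "matpow A 0 = mat 1"
| "matpow A (Suc j) = A ** matpow A j"

definition smat :: "'a::times \<Rightarrow> 'a^'n^'n \<Rightarrow> 'a^'n^'n" where
  "smat c A = (\<chi> i j. c * A $ i $ j)"

definition poly_mat :: "'a::comm_ring_1 poly \<Rightarrow> 'a^'n^'n \<Rightarrow> 'a^'n^'n" where
  "poly_mat p A = (\<Sum>j\<le>degree p. smat (coeff p j) (matpow A j))"

definition Int_K_Mn :: "'n::finite itself \<Rightarrow> ('a::idom fract) poly set" where
  "Int_K_Mn _ = {f. \<forall>A :: 'a^'n^'n. \<forall>i j.
      poly_mat f (\<chi> i j. to_fract (A $ i $ j)) $ i $ j \<in> range to_fract}"

text \<open>The M-adic completion of D is realised as the inverse limit of the D/M^k: an element
  is a sequence x with x (k+1) congruent to x k modulo M^k (x k represents the component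
  in D/M^k), and two sequences represent the same element iff x k - y k \<in> M^k for all k.
  Likewise an n x n matrix over the completion is a compatible sequence of matrices over D
  (M_n of the inverse limit is the inverse limit of the M_n(D/M^k)).\<close>

definition hat_elem :: "'a::comm_ring_1 set \<Rightarrow> (nat \<Rightarrow> 'a) \<Rightarrow> bool" where
  "hat_elem M x \<longleftrightarrow> (\<forall>k. x (Suc k) - x k \<in> ideal_pow M k)"

definition hat_mat :: "'a::comm_ring_1 set \<Rightarrow> (nat \<Rightarrow> 'a^'n^'n) \<Rightarrow> bool" where
  "hat_mat M C \<longleftrightarrow> (\<forall>i j. hat_elem M (\<lambda>k. C k $ i $ j))"

definition hat_mat_eq :: "'a::comm_ring_1 set \<Rightarrow> (nat \<Rightarrow> 'a^'n^'n) \<Rightarrow> (nat \<Rightarrow> 'a^'n^'n) \<Rightarrow> bool" where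
  "hat_mat_eq M X Y \<longleftrightarrow> (\<forall>k i j. X k $ i $ j - Y k $ i $ j \<in> ideal_pow M k)"

text \<open>A polynomial over the completion is given by its list of coefficients (each an element
  of the completion); its value at a matrix C over the completion is computed componentwise.\<close>
definition hat_poly_mat :: "(nat \<Rightarrow> 'a::comm_ring_1) list \<Rightarrow> (nat \<Rightarrow> 'a^'n^'n) \<Rightarrow> nat \<Rightarrow> 'a^'n^'n" where
  "hat_poly_mat cs C = (\<lambda>k. \<Sum>j<length cs. smat ((cs ! j) k) (matpow (C k) j))"

definition D_poly_hat_mat :: "'a::comm_ring_1 poly \<Rightarrow> (nat \<Rightarrow> 'a^'n^'n) \<Rightarrow> nat \<Rightarrow> 'a^'n^'n" where
  "D_poly_hat_mat g C = (\<lambda>k. poly_mat g (C k))"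

definition scal_hat_mat :: "'a::comm_ring_1 \<Rightarrow> (nat \<Rightarrow> 'a^'n^'n) \<Rightarrow> nat \<Rightarrow> 'a^'n^'n" where
  "scal_hat_mat d X = (\<lambda>k. smat d (X k))"

text \<open>f(C) \<in> D-hat[C] for f = g/d: by the convention f(C) = d^{-1} g(C) (computed in the
  quotient field of the domain D-hat) this means g(C) = d * s(C) for some s \<in> D-hat[x].\<close>
definition frac_val_in_hat_alg :: "'a::comm_ring_1 set \<Rightarrow> 'a poly \<Rightarrow> 'a \<Rightarrow> (nat \<Rightarrow> 'a^'n^'n) \<Rightarrow> bool" where
  "frac_val_in_hat_alg M g d C \<longleftrightarrow> (\<exists>cs. (\<forall>c\<in>set cs. hat_elem M c) \<and>
      hat_mat_eq M (D_poly_hat_mat g C) (scal_hat_mat d (hat_poly_mat cs C)))"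

end

theory Submission
  imports Defs
begin


lemma ideal_0: "is_ideal I \<Longrightarrow> 0 \<in> I" by (simp add: is_ideal_def)
lemma ideal_add: "is_ideal I \<Longrightarrow> x \<in> I \<Longrightarrow> y \<in> I \<Longrightarrow> x + y \<in> I" by (simp add: is_ideal_def)
lemma ideal_lmult: "is_ideal I \<Longrightarrow> x \<in> I \<Longrightarrow> r * x \<in> I" by (simp add: is_ideal_def)
lemma ideal_rmult: "is_ideal I \<Longrightarrow> x \<in> I \<Longrightarrow> x * r \<in> I"
  using ideal_lmult[of I x r] by (simp add: mult.commute)
lemma ideal_uminus: "is_ideal I \<Longrightarrow> x \<in> I \<Longrightarrow> - x \<in> I"
  using ideal_lmult[of I x "-1"] by simp
lemma ideal_diff: "is_ideal I \<Longrightarrow> x \<in> I \<Longrightarrow> y \<in> I \<Longrightarrow> x - y \<in> I"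
  using ideal_add[of I x "-y"] ideal_uminus[of I y] by simp
lemma ideal_sum: "is_ideal I \<Longrightarrow> (\<And>i. i \<in> S \<Longrightarrow> f i \<in> I) \<Longrightarrow> sum f S \<in> I"
proof (induction S rule: infinite_finite_induct)
  case (infinite A) thus ?case by (simp add: ideal_0)
next
  case empty thus ?case by (simp add: ideal_0)
next
  case (insert x F) thus ?case by (simp add: ideal_add)
qed

lemma ideal_UNIV: "is_ideal (UNIV :: 'a::comm_ring_1 set)" by (simp add: is_ideal_def)

lemma ideal_prod_ideal:
  assumes I: "is_ideal I" shows "is_ideal (ideal_prod I J)"
  unfolding is_ideal_def
proof (intro conjI ballI allI)
  show "0 \<in> ideal_prod I J" unfolding ideal_prod_def
    by (rule CollectI, rule exI[of _ 0]) simp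
next
  fix x y assume x: "x \<in> ideal_prod I J" and y: "y \<in> ideal_prod I J"
  from x obtain m :: nat and f g where fg: "\<forall>i<m. f i \<in> I \<and> g i \<in> J" and xe: "x = (\<Sum>i<m. f i * g i)"
    unfolding ideal_prod_def by blast
  from y obtain m' :: nat and f' g' where fg': "\<forall>i<m'. f' i \<in> I \<and> g' i \<in> J" and ye: "y = (\<Sum>i<m'. f' i * g' i)"
    unfolding ideal_prod_def by blast
  define F where "F i = (if i < m then f i else f' (i - m))" for i
  define G where "G i = (if i < m then g i else g' (i - m))" for i
  have "(\<Sum>i<m + m'. F i * G i) = (\<Sum>i<m. F i * G i) + (\<Sum>i<m'. F (m + i) * G (m + i))"
    by (induction m') (simp_all add: add.assoc)
  also have "\<dots> = x + y" unfolding xe ye F_def G_def by simp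
  finally have "x + y = (\<Sum>i<m + m'. F i * G i)" by simp
  moreover have "\<forall>i<m + m'. F i \<in> I \<and> G i \<in> J" using fg fg' unfolding F_def G_def by auto
  ultimately show "x + y \<in> ideal_prod I J" unfolding ideal_prod_def by blast
next
  fix r x assume x: "x \<in> ideal_prod I J"
  from x obtain m :: nat and f g where fg: "\<forall>i<m. f i \<in> I \<and> g i \<in> J" and xe: "x = (\<Sum>i<m. f i * g i)"
    unfolding ideal_prod_def by blast
  have "r * x = (\<Sum>i<m. (r * f i) * g i)" unfolding xe by (simp add: sum_distrib_left mult.assoc)
  moreover have "\<forall>i<m. r * f i \<in> I \<and> g i \<in> J" using fg ideal_lmult[OF I] by auto
  ultimately show "r * x \<in> ideal_prod I J" unfolding ideal_prod_def
    by (intro CollectI exI[of _ m] exI[of _ "\<lambda>i. r * f i"] exI[of _ g]) simp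
qed

lemma ideal_prod_sub: assumes J: "is_ideal J" shows "ideal_prod I J \<subseteq> J"
proof
  fix x assume "x \<in> ideal_prod I J"
  then obtain m :: nat and f g where fg: "\<forall>i<m. f i \<in> I \<and> g i \<in> J" and xe: "x = (\<Sum>i<m. f i * g i)"
    unfolding ideal_prod_def by blast
  show "x \<in> J" unfolding xe by (rule ideal_sum[OF J]) (use fg ideal_lmult[OF J] in auto)
qed

lemma ideal_prod_mem: "a \<in> I \<Longrightarrow> b \<in> J \<Longrightarrow> a * b \<in> ideal_prod I J"
  unfolding ideal_prod_def by (rule CollectI, rule exI[of _ 1], rule exI[of _ "\<lambda>_. a"], rule exI[of _ "\<lambda>_. b"]) simp

lemma ideal_pow_ideal: "is_ideal M \<Longrightarrow> is_ideal (ideal_pow M k)"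
  by (cases k) (simp_all add: ideal_UNIV ideal_prod_ideal)

lemma ideal_pow_Suc_sub: "is_ideal M \<Longrightarrow> ideal_pow M (Suc k) \<subseteq> ideal_pow M k"
  by (simp add: ideal_prod_sub ideal_pow_ideal)

lemma ideal_pow_mono: assumes "is_ideal M" "k \<le> K" shows "ideal_pow M K \<subseteq> ideal_pow M k"
  using assms(2)
proof (induction K)
  case 0 thus ?case by simp
next
  case (Suc K) thus ?case using ideal_pow_Suc_sub[OF assms(1), of K] by (cases "k = Suc K") auto
qed

lemma ideal_pow_mult: "a \<in> M \<Longrightarrow> b \<in> ideal_pow M k \<Longrightarrow> a * b \<in> ideal_pow M (Suc k)"
  by (simp add: ideal_prod_mem)




lemma smat_component[simp]: "smat c A $ i $ j = c * A $ i $ j"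
  by (simp add: smat_def)

lemma smat_0[simp]: "smat 0 (X::'a::comm_ring_1^'n^'n) = 0" by (simp add: vec_eq_iff)
lemma smat_1[simp]: "smat 1 (X::'a::comm_ring_1^'n^'n) = X" by (simp add: vec_eq_iff)
lemma smat_zero_right[simp]: "smat (c::'a::comm_ring_1) (0::'a^'n^'n) = 0" by (simp add: vec_eq_iff)
lemma smat_add_left: "smat (a + b) (X::'a::comm_ring_1^'n^'n) = smat a X + smat b X" by (simp add: vec_eq_iff algebra_simps)
lemma smat_add_right: "smat a ((X::'a::comm_ring_1^'n^'n) + Y) = smat a X + smat a Y" by (simp add: vec_eq_iff algebra_simps)
lemma smat_diff_right: "smat a ((X::'a::comm_ring_1^'n^'n) - Y) = smat a X - smat a Y" by (simp add: vec_eq_iff algebra_simps)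
lemma smat_smat: "smat a (smat b (X::'a::comm_ring_1^'n^'n)) = smat (a * b) X" by (simp add: vec_eq_iff algebra_simps)
lemma smat_sum_right: "smat c (sum (f :: _ \<Rightarrow> 'a::comm_ring_1^'n^'n) S) = (\<Sum>i\<in>S. smat c (f i))"
  by (induction S rule: infinite_finite_induct) (simp_all add: smat_add_right)
lemma smat_sum_left: "smat (sum f S) (X :: 'a::comm_ring_1^'n^'n) = (\<Sum>i\<in>S. smat (f i) X)"
  by (induction S rule: infinite_finite_induct) (simp_all add: smat_add_left)
lemma mult_smat: "(A :: 'a::comm_ring_1^'n^'n) ** smat c X = smat c (A ** X)"
  by (simp add: vec_eq_iff matrix_matrix_mult_def sum_distrib_left algebra_simps)
lemma smat_mult: "smat c (X :: 'a::comm_ring_1^'n^'n) ** A = smat c (X ** A)"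
  by (simp add: vec_eq_iff matrix_matrix_mult_def sum_distrib_left algebra_simps)
lemma mult_sum_right: "(A :: 'a::comm_ring_1^'n^'n) ** sum f S = (\<Sum>i\<in>S. A ** f i)"
  by (induction S rule: infinite_finite_induct) (simp_all add: matrix_add_ldistrib)
lemma mat_add_rdistrib: "((B::'a::comm_ring_1^'n^'n) + C) ** A = B ** A + C ** A"
  by (simp add: vec_eq_iff matrix_matrix_mult_def distrib_right sum.distrib)

lemma mult_sum_left: "sum (f :: _ \<Rightarrow> 'a::comm_ring_1^'n^'n) S ** (A :: 'a::comm_ring_1^'n^'n) = (\<Sum>i\<in>S. f i ** A)"
  by (induction S rule: infinite_finite_induct) (simp_all add: mat_add_rdistrib)
lemma smat_mat1_mult: "smat c (mat 1) ** (A :: 'a::comm_ring_1^'n^'n) = smat c A"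
  by (simp add: smat_mult)

definition ev :: "nat \<Rightarrow> (nat \<Rightarrow> 'a::comm_ring_1) \<Rightarrow> 'a^'n^'n \<Rightarrow> 'a^'n^'n" where
  "ev m t A = (\<Sum>j<m. smat (t j) (matpow A j))"

lemma poly_mat_ev: assumes "degree p < m" shows "poly_mat p A = ev m (coeff p) A"
proof -
  have "poly_mat p A = (\<Sum>j\<in>{..degree p}. smat (coeff p j) (matpow A j))" by (simp add: poly_mat_def)
  also have "\<dots> = (\<Sum>j\<in>{..<m}. smat (coeff p j) (matpow A j))"
    by (rule sum.mono_neutral_left) (use assms in \<open>auto simp: coeff_eq_0\<close>)
  finally show ?thesis by (simp add: ev_def)
qed

lemma ev_add: "ev m (\<lambda>j. s j + t j) A = ev m s A + ev m t A"
  by (simp add: ev_def smat_add_left sum.distrib)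

lemma ev_smult: "ev m (\<lambda>j. c * t j) A = smat c (ev m t A)"
  by (simp add: ev_def smat_sum_right smat_smat)

lemma poly_mat_0[simp]: "poly_mat 0 A = 0" by (simp add: poly_mat_def)

lemma poly_mat_add: "poly_mat (p + q) A = poly_mat p A + poly_mat q A"
proof -
  define m where "m = Suc (max (degree p) (degree q))"
  have "degree (p + q) < m" using degree_add_le_max[of p q] unfolding m_def by linarith
  hence "poly_mat (p + q) A = ev m (coeff (p + q)) A" by (rule poly_mat_ev)
  also have "\<dots> = ev m (coeff p) A + ev m (coeff q) A" using ev_add[of m "coeff p" "coeff q" A]
    by (simp add: coeff_add[abs_def])
  also have "\<dots> = poly_mat p A + poly_mat q A"
    using poly_mat_ev[of p m A] poly_mat_ev[of q m A] by (simp add: m_def)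
  finally show ?thesis .
qed

lemma poly_mat_smult: "poly_mat (smult c p) A = smat c (poly_mat p A)"
proof -
  define m where "m = Suc (degree p)"
  have "degree (smult c p) < m" using degree_smult_le[of c p] unfolding m_def by linarith
  hence "poly_mat (smult c p) A = ev m (coeff (smult c p)) A" by (rule poly_mat_ev)
  also have "\<dots> = smat c (ev m (coeff p) A)" using ev_smult[of m c "coeff p" A] by (simp add: coeff_smult[abs_def])
  also have "\<dots> = smat c (poly_mat p A)" using poly_mat_ev[of p m A] by (simp add: m_def)
  finally show ?thesis .
qed

lemma poly_mat_pCons: "poly_mat (pCons a p) A = smat a (mat 1) + A ** poly_mat p A"
proof -
  define m where "m = Suc (degree p)"
  have d: "degree (pCons a p) < Suc m" unfolding m_def by (simp add: degree_pCons_le Suc_le_lessD)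
  have "poly_mat (pCons a p) A = ev (Suc m) (coeff (pCons a p)) A" by (rule poly_mat_ev[OF d])
  also have "\<dots> = smat a (mat 1) + (\<Sum>j<m. smat (coeff p j) (matpow A (Suc j)))"
    unfolding ev_def by (subst sum.lessThan_Suc_shift) simp
  also have "(\<Sum>j<m. smat (coeff p j) (matpow A (Suc j))) = A ** ev m (coeff p) A"
    by (simp add: ev_def mult_sum_right mult_smat)
  also have "ev m (coeff p) A = poly_mat p A" using poly_mat_ev[of p m A] by (simp add: m_def)
  finally show ?thesis .
qed

lemma poly_mat_mult: "poly_mat (p * q) A = poly_mat p A ** poly_mat q A"
proof (induction p)
  case 0 thus ?case by (simp add: vec_eq_iff matrix_matrix_mult_def)
next
  case (pCons a p)
  have "poly_mat (pCons a p * q) A = poly_mat (smult a q + pCons 0 (p * q)) A" by simp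
  also have "\<dots> = smat a (poly_mat q A) + A ** (poly_mat p A ** poly_mat q A)"
    by (simp add: poly_mat_add poly_mat_smult poly_mat_pCons pCons.IH)
  also have "\<dots> = poly_mat (pCons a p) A ** poly_mat q A"
    by (simp add: poly_mat_pCons mat_add_rdistrib smat_mat1_mult matrix_mul_assoc)
  finally show ?case .
qed

lemma poly_mat_comm: "poly_mat p A ** poly_mat q A = poly_mat q A ** poly_mat p A"
  by (metis poly_mat_mult mult.commute)

section \<open>Congruence of matrices modulo an ideal\<close>

definition cong_mat :: "'a::comm_ring_1 set \<Rightarrow> 'a^'n^'n \<Rightarrow> 'a^'n^'n \<Rightarrow> bool" where
  "cong_mat I A B \<longleftrightarrow> (\<forall>i j. A $ i $ j - B $ i $ j \<in> I)"

context fixes I :: "'a::comm_ring_1 set" assumes I: "is_ideal I"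
begin

lemma cong_mat_refl: "cong_mat I A A"
  by (simp add: cong_mat_def ideal_0[OF I])
lemma cong_mat_sym: "cong_mat I A B \<Longrightarrow> cong_mat I B A"
  unfolding cong_mat_def using ideal_uminus[OF I] by (metis minus_diff_eq)
lemma cong_mat_trans: "cong_mat I A B \<Longrightarrow> cong_mat I B C \<Longrightarrow> cong_mat I A C"
  unfolding cong_mat_def
proof (intro allI)
  fix i j assume "\<forall>i j. A $ i $ j - B $ i $ j \<in> I" "\<forall>i j. B $ i $ j - C $ i $ j \<in> I"
  hence "(A $ i $ j - B $ i $ j) + (B $ i $ j - C $ i $ j) \<in> I" using ideal_add[OF I] by blast
  thus "A $ i $ j - C $ i $ j \<in> I" by simp
qed
lemma cong_mat_add: "cong_mat I A B \<Longrightarrow> cong_mat I A' B' \<Longrightarrow> cong_mat I (A + A') (B + B')"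
  unfolding cong_mat_def using ideal_add[OF I] by (simp add: add_diff_add)
lemma cong_mat_sum: "(\<And>x. x \<in> S \<Longrightarrow> cong_mat I (f x) (g x)) \<Longrightarrow> cong_mat I (sum f S) (sum g S)"
  by (induction S rule: infinite_finite_induct) (simp_all add: cong_mat_refl cong_mat_add)
lemma cong_mat_smat: "cong_mat I A B \<Longrightarrow> cong_mat I (smat c A) (smat c B)"
  unfolding cong_mat_def using ideal_lmult[OF I] by (simp add: right_diff_distrib[symmetric])
lemma cong_mat_smat_coef: "c - c' \<in> I \<Longrightarrow> cong_mat I (smat c A) (smat c' A)"
  unfolding cong_mat_def using ideal_rmult[OF I] by (simp add: left_diff_distrib[symmetric])
lemma cong_mat_mult:
  assumes "cong_mat I A B" "cong_mat I A' B'"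
  shows "cong_mat I ((A :: 'a^'n^'n) ** A') (B ** B')"
  unfolding cong_mat_def
proof (intro allI)
  fix i j
  have "(A ** A') $ i $ j - (B ** B') $ i $ j =
     (\<Sum>k\<in>UNIV. (A $ i $ k - B $ i $ k) * A' $ k $ j + B $ i $ k * (A' $ k $ j - B' $ k $ j))"
    by (simp add: matrix_matrix_mult_def sum_subtractf[symmetric] algebra_simps)
  also have "\<dots> \<in> I"
    using assms unfolding cong_mat_def
    by (intro ideal_sum[OF I] ideal_add[OF I] ideal_rmult[OF I] ideal_lmult[OF I]) auto
  finally show "(A ** A') $ i $ j - (B ** B') $ i $ j \<in> I" .
qed
lemma cong_mat_matpow: "cong_mat I A B \<Longrightarrow> cong_mat I (matpow A j) (matpow B j)"
  by (induction j) (simp_all add: cong_mat_refl cong_mat_mult)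
lemma cong_mat_ev: "cong_mat I A B \<Longrightarrow> cong_mat I (ev m t A) (ev m t B)"
  unfolding ev_def by (intro cong_mat_sum cong_mat_smat cong_mat_matpow)
lemma cong_mat_ev_coef: "(\<And>j. j < m \<Longrightarrow> s j - t j \<in> I) \<Longrightarrow> cong_mat I (ev m s A) (ev m t A)"
  unfolding ev_def by (intro cong_mat_sum cong_mat_smat_coef) auto
lemma cong_mat_poly_mat: "cong_mat I A B \<Longrightarrow> cong_mat I (poly_mat p A) (poly_mat p B)"
  unfolding poly_mat_def by (intro cong_mat_sum cong_mat_smat cong_mat_matpow)

end




definition adjm :: "'a::comm_ring_1^'n^'n \<Rightarrow> 'a^'n^'n" where
  "adjm B = (\<chi> j k. det (\<chi> r. if r = k then axis j (1::'a) else B $ r))"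

lemma mult_adjm: "(B::'a::comm_ring_1^'n^'n) ** adjm B = (\<chi> i k. if i = k then det B else 0)"
proof -
  have "(B ** adjm B) $ i $ k = (if i = k then det B else 0)" for i k
  proof -
    have "(B ** adjm B) $ i $ k = (\<Sum>j\<in>UNIV. B $ i $ j * det (\<chi> r. if r = k then axis j 1 else B $ r))"
      by (simp add: matrix_matrix_mult_def adjm_def)
    also have "\<dots> = (\<Sum>j\<in>UNIV. det (\<chi> r. if r = k then B $ i $ j *s axis j 1 else B $ r))"
      by (simp add: det_row_mul)
    also have "\<dots> = det (\<chi> r. if r = k then (\<Sum>j\<in>UNIV. B $ i $ j *s axis j 1) else B $ r)"
      by (rule det_linear_row_sum[symmetric]) simp
    also have "(\<Sum>j\<in>UNIV. B $ i $ j *s axis j (1::'a)) = B $ i"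
      by (simp add: vec_eq_iff axis_def sum_component if_distrib cong: if_cong)
    also have "det (\<chi> r. if r = k then B $ i else B $ r) = (if i = k then det B else 0)"
    proof (cases "i = k")
      case True
      have "(\<chi> r. if r = k then B $ i else B $ r) = B" using True by (simp add: vec_eq_iff)
      thus ?thesis using True by simp
    next
      case False
      have "det (\<chi> r. if r = k then B $ i else B $ r) = 0"
        by (rule det_identical_rows[OF False]) (simp add: row_def vec_eq_iff False)
      thus ?thesis using False by simp
    qed
    finally show ?thesis .
  qed
  thus ?thesis by (simp add: vec_eq_iff)
qed

section \<open>Characteristic polynomial and Cayley--Hamilton\<close>

definition charmat :: "'a::comm_ring_1^'n^'n \<Rightarrow> 'a poly^'n^'n" where
  "charmat A = (\<chi> i j. (if i = j then [:0, 1:] else 0) - [:A $ i $ j:])"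

definition charpoly :: "'a::comm_ring_1^'n^'n \<Rightarrow> 'a poly" where
  "charpoly A = det (charmat A)"

definition mc :: "'a::comm_ring_1 poly^'n^'n \<Rightarrow> nat \<Rightarrow> 'a^'n^'n" where
  "mc P j = (\<chi> i k. coeff (P $ i $ k) j)"

lemma x_mult_poly: "[:0, 1:] * (p::'a::comm_ring_1 poly) = pCons 0 p" by simp
lemma const_mult_poly: "[:a:] * (p::'a::comm_ring_1 poly) = smult a p" by simp

lemma mc_charmat_mult:
  "mc (charmat A ** P) j = (if j = 0 then 0 else mc P (j - 1)) - A ** mc P j"
proof -
  have "coeff ((charmat A ** P) $ i $ k) j =
      (if j = 0 then 0 else coeff (P $ i $ k) (j - 1)) - (\<Sum>l\<in>UNIV. A $ i $ l * coeff (P $ l $ k) j)" for i k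
  proof -
    have "(charmat A ** P) $ i $ k = (\<Sum>l\<in>UNIV. (if i = l then pCons 0 (P $ l $ k) else 0) - smult (A $ i $ l) (P $ l $ k))"
      unfolding matrix_matrix_mult_def charmat_def
      by (simp, intro sum.cong) (simp_all add: left_diff_distrib)
    also have "\<dots> = pCons 0 (P $ i $ k) - (\<Sum>l\<in>UNIV. smult (A $ i $ l) (P $ l $ k))"
      by (simp add: sum_subtractf)
    finally show ?thesis by (cases j) (simp_all add: coeff_sum)
  qed
  thus ?thesis by (simp add: vec_eq_iff mc_def matrix_matrix_mult_def)
qed

lemma mc_diag: "mc (\<chi> i k. if i = k then p else 0) j = smat (coeff p j) (mat 1)"
  by (simp add: vec_eq_iff mc_def mat_def)

lemma matpow_comm: "matpow A j ** A = A ** matpow A j"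
  by (induction j) (simp_all add: matrix_mul_assoc[symmetric])

lemma mat_diff_ldistrib: "(A::'a::comm_ring_1^'n^'n) ** (B - C) = A ** B - A ** C"
  by (simp add: vec_eq_iff matrix_matrix_mult_def right_diff_distrib sum_subtractf)

lemma cayley_hamilton: "poly_mat (charpoly A) A = 0"
proof -
  define P where "P = adjm (charmat A)"
  define Q where "Q = mc P"
  define ds where "ds = (\<Sum>i\<in>UNIV. \<Sum>k\<in>UNIV. degree (P $ i $ k))"
  have dP: "degree (P $ i $ k) \<le> ds" for i k
  proof -
    have "degree (P $ i $ k) \<le> (\<Sum>k\<in>UNIV. degree (P $ i $ k))" by (rule member_le_sum) auto
    also have "\<dots> \<le> ds" unfolding ds_def by (rule member_le_sum[of _ UNIV "\<lambda>i. \<Sum>k\<in>UNIV. degree (P $ i $ k)"]) auto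
    finally show ?thesis .
  qed
  have Q0: "Q j = 0" if "j > ds" for j
  proof -
    have "coeff (P $ i $ k) j = 0" for i k
      by (rule coeff_eq_0) (use dP[of i k] that in linarith)
    thus ?thesis by (simp add: Q_def mc_def vec_eq_iff)
  qed
  define m where "m = degree (charpoly A) + ds + 2"
  have key: "mc (charmat A ** P) j = smat (coeff (charpoly A) j) (mat 1)" for j
    by (simp add: P_def mult_adjm charpoly_def mc_diag)
  define V where "V j = matpow A j ** (if j = 0 then 0 else Q (j - 1))" for j
  have "poly_mat (charpoly A) A = ev m (coeff (charpoly A)) A"
    by (rule poly_mat_ev) (simp add: m_def)
  also have "\<dots> = (\<Sum>j<m. matpow A j ** mc (charmat A ** P) j)"
    unfolding ev_def key mult_smat matrix_mul_rid ..
  also have "\<dots> = (\<Sum>j<m. V j - V (Suc j))"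
  proof (rule sum.cong[OF refl])
    fix j
    have "matpow A j ** (A ** Q j) = matpow A (Suc j) ** Q j"
      by (simp add: matrix_mul_assoc matpow_comm)
    thus "matpow A j ** mc (charmat A ** P) j = V j - V (Suc j)"
      unfolding mc_charmat_mult V_def Q_def by (simp add: mat_diff_ldistrib)
  qed
  also have "\<dots> = V 0 - V m" by (rule sum_lessThan_telescope')
  also have "\<dots> = 0"
  proof -
    have "Q (m - 1) = 0" by (rule Q0) (simp add: m_def)
    moreover have "m \<noteq> 0" by (simp add: m_def)
    ultimately show ?thesis by (simp add: V_def)
  qed
  finally show ?thesis .
qed

lemma charpoly_monic:
  fixes A :: "'a::idom^'n^'n"
  shows "degree (charpoly A) = CARD('n) \<and> lead_coeff (charpoly A) = 1"
proof -
  let ?B = "charmat A"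
  define T where "T = (\<Prod>i\<in>UNIV. ?B $ i $ i)"
  define R where "R = (\<Sum>p\<in>{p. p permutes (UNIV::'n set)} - {id}. of_int (sign p) * (\<Prod>i\<in>UNIV. ?B $ i $ p i))"
  have fin: "finite {p. p permutes (UNIV::'n set)}" by (simp add: finite_permutations)
  have cp: "charpoly A = T + R"
    unfolding charpoly_def det_def T_def R_def
    by (subst sum.remove[OF fin, of id]) (simp_all add: permutes_id)
  have diag: "?B $ i $ i = [:- A $ i $ i, 1:]" for i
    by (simp add: charmat_def)
  have dT: "degree T = CARD('n)" and lT: "lead_coeff T = 1"
  proof -
    have "lead_coeff T = 1" unfolding T_def lead_coeff_prod diag by simp
    moreover have "degree T = (\<Sum>i\<in>UNIV. degree (?B $ i $ i))" unfolding T_def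
      by (rule degree_prod_eq_sum_degree) (simp add: diag)
    ultimately show "degree T = CARD('n)" "lead_coeff T = 1" by (simp_all add: diag)
  qed
  have dR: "degree R < CARD('n)"
  proof -
    have "degree R \<le> CARD('n) - 1" unfolding R_def
    proof (rule degree_sum_le)
      show "finite ({p. p permutes (UNIV::'n set)} - {id})" using fin by simp
    next
      fix p assume p: "p \<in> {p. p permutes (UNIV::'n set)} - {id}"
      then obtain i0 where i0: "p i0 \<noteq> i0" by (auto simp: fun_eq_iff)
      have deg1: "degree (?B $ i $ j) \<le> (if i = j then 1 else 0)" for i j
        by (auto simp: charmat_def diag)
      have "degree (\<Prod>i\<in>UNIV. ?B $ i $ p i) \<le> (\<Sum>i\<in>UNIV. degree (?B $ i $ p i))"
        using degree_prod_sum_le[of UNIV "\<lambda>i. ?B $ i $ p i"] by (simp add: o_def)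
      also have "\<dots> \<le> (\<Sum>i\<in>UNIV. if i = i0 then 0 else 1)"
      proof (rule sum_mono)
        fix i show "degree (?B $ i $ p i) \<le> (if i = i0 then 0 else 1)"
          using deg1[of i "p i"] i0 by (cases "i = p i"; cases "i = i0") auto
      qed
      also have "\<dots> = CARD('n) - 1"
      proof -
        have "(\<Sum>i\<in>UNIV. if i = i0 then 0 else 1::nat) = (\<Sum>i\<in>UNIV - {i0}. 1)"
          by (rule sum.mono_neutral_cong_right) auto
        thus ?thesis by (simp add: card_Diff_singleton)
      qed
      finally have "degree (\<Prod>i\<in>UNIV. ?B $ i $ p i) \<le> CARD('n) - 1" .
      moreover have "degree (of_int (sign p) * (\<Prod>i\<in>UNIV. ?B $ i $ p i)) \<le> degree (\<Prod>i\<in>UNIV. ?B $ i $ p i)"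
        using degree_mult_le[of "of_int (sign p)" "\<Prod>i\<in>UNIV. ?B $ i $ p i"] by simp
      ultimately show "degree (of_int (sign p) * (\<Prod>i\<in>UNIV. ?B $ i $ p i)) \<le> CARD('n) - 1" by linarith
    qed
    moreover have "CARD('n) > 0" by simp
    ultimately show ?thesis by linarith
  qed
  have deg: "degree (charpoly A) = CARD('n)" using cp dT dR degree_add_eq_left[of R T] by simp
  moreover have "lead_coeff (charpoly A) = 1"
  proof -
    have "lead_coeff (charpoly A) = coeff (T + R) CARD('n)" using deg cp by simp
    also have "\<dots> = coeff T CARD('n) + coeff R CARD('n)" by simp
    also have "coeff R CARD('n) = 0" using dR by (rule coeff_eq_0)
    also have "coeff T CARD('n) = 1" using lT dT by simp
    finally show ?thesis by simp
  qed
  ultimately show ?thesis by simp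
qed




section \<open>Companion matrix\<close>

definition comp :: "('n::finite \<Rightarrow> nat) \<Rightarrow> (nat \<Rightarrow> 'a::comm_ring_1) \<Rightarrow> 'a^'n^'n" where
  "comp e c = (\<chi> i j. if Suc (e j) < CARD('n) then (if e i = Suc (e j) then 1 else 0) else - c (e i))"

lemma mult_axis: "(M :: 'a::comm_ring_1^'n^'n) *v axis j 1 = (\<chi> i. M $ i $ j)"
  by (simp add: vec_eq_iff matrix_vector_mult_def axis_def if_distrib cong: if_cong)

lemma sum_mult_vec: "sum (f :: _ \<Rightarrow> 'a::comm_ring_1^'n^'n) S *v u = (\<Sum>k\<in>S. f k *v u)"
  by (induction S rule: infinite_finite_induct) (simp_all add: matrix_vector_mult_add_rdistrib)

lemma smat_mult_vec: "smat c (X :: 'a::comm_ring_1^'n^'n) *v u = c *s (X *v u)"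
  by (simp add: vec_eq_iff matrix_vector_mult_def sum_distrib_left algebra_simps)

context
  fixes e :: "'n::finite \<Rightarrow> nat"
  assumes bij: "bij_betw e UNIV {..<CARD('n)}"
begin

definition "phi = inv e"

lemma e_phi: "k < CARD('n) \<Longrightarrow> e (phi k) = k"
  unfolding phi_def using bij by (simp add: bij_betw_def f_inv_into_f)

lemma phi_e: "phi (e i) = i"
  unfolding phi_def using bij by (simp add: bij_betw_def)

lemma e_less: "e i < CARD('n)"
  using bij by (auto simp: bij_betw_def)

lemma comp_axis: "comp e c *v axis j 1 =
   (if Suc (e j) < CARD('n) then axis (phi (Suc (e j))) 1 else (\<chi> i. - c (e i)))"
proof -
  have that: "e i = Suc (e j) \<longleftrightarrow> i = phi (Suc (e j))" if "Suc (e j) < CARD('n)" for i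
    using e_phi[OF that] phi_e by metis
  have "(comp e c *v axis j 1) $ i =
    (if Suc (e j) < CARD('n) then axis (phi (Suc (e j))) 1 else (\<chi> i. - c (e i))) $ i" for i
  proof -
    have "(comp e c *v axis j 1) $ i = comp e c $ i $ j" by (simp only: mult_axis vec_lambda_beta)
    thus ?thesis using that by (simp add: comp_def axis_def)
  qed
  thus ?thesis by (simp only: vec_eq_iff) blast
qed

lemma pow_axis: "k < CARD('n) \<Longrightarrow> matpow (comp e c) k *v axis (phi 0) 1 = axis (phi k) 1"
proof (induction k)
  case 0 thus ?case by simp
next
  case (Suc k)
  have "matpow (comp e c) (Suc k) *v axis (phi 0) 1 = comp e c *v (matpow (comp e c) k *v axis (phi 0) 1)"
    by (simp add: matrix_vector_mul_assoc)
  also have "\<dots> = comp e c *v axis (phi k) 1" using Suc by simp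
  also have "\<dots> = axis (phi (Suc k)) 1" using Suc.prems by (simp add: comp_axis e_phi)
  finally show ?case .
qed

lemma pow_axis_N: "matpow (comp e c) CARD('n) *v axis (phi 0) 1 = (\<chi> i. - c (e i))"
proof -
  obtain k where k: "CARD('n) = Suc k" using zero_less_card_finite not0_implies_Suc by blast
  have "matpow (comp e c) (Suc k) *v axis (phi 0) 1 = comp e c *v (matpow (comp e c) k *v axis (phi 0) 1)"
    by (simp add: matrix_vector_mul_assoc)
  also have "\<dots> = comp e c *v axis (phi k) 1" using k pow_axis[of k c] by simp
  also have "\<dots> = (\<chi> i. - c (e i))" using k by (simp add: comp_axis e_phi)
  finally show ?thesis using k by simp
qed

lemma ev_axis: "ev CARD('n) t (comp e c) *v axis (phi 0) 1 = (\<chi> i. t (e i))"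
proof -
  have "ev CARD('n) t (comp e c) *v axis (phi 0) 1 = (\<Sum>k<CARD('n). t k *s axis (phi k) 1)"
    unfolding ev_def sum_mult_vec smat_mult_vec by (intro sum.cong refl) (simp add: pow_axis)
  also have "\<dots> = (\<chi> i. t (e i))"
  proof -
    have "(\<Sum>k<CARD('n). t k * (if i = phi k then 1 else 0)) = t (e i)" for i
    proof -
      have "(\<Sum>k<CARD('n). t k * (if i = phi k then 1 else 0)) = (\<Sum>k<CARD('n). if k = e i then t k else 0)"
      proof (intro sum.cong refl)
        fix k assume "k \<in> {..<CARD('n)}"
        hence "(i = phi k) = (k = e i)" using e_phi phi_e by fastforce
        thus "t k * (if i = phi k then 1 else 0) = (if k = e i then t k else 0)" by simp
      qed
      also have "\<dots> = t (e i)" using e_less[of i] by simp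
      finally show ?thesis .
    qed
    thus ?thesis by (simp add: vec_eq_iff axis_def sum_component)
  qed
  finally show ?thesis .
qed

lemma poly_comp_axis: "degree p < CARD('n) \<Longrightarrow> poly_mat p (comp e c) *v axis (phi 0) 1 = (\<chi> i. coeff p (e i))"
  by (simp add: poly_mat_ev ev_axis)

lemma char_comp_axis:
  assumes "degree (chi :: 'a::comm_ring_1 poly) = CARD('n)" "lead_coeff chi = 1"
  shows "poly_mat chi (comp e (coeff chi)) *v axis (phi 0) 1 = 0"
proof -
  have "poly_mat chi (comp e (coeff chi)) = ev (Suc CARD('n)) (coeff chi) (comp e (coeff chi))"
    by (rule poly_mat_ev) (simp add: assms)
  also have "\<dots> = ev CARD('n) (coeff chi) (comp e (coeff chi)) + matpow (comp e (coeff chi)) CARD('n)"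
    using assms by (simp add: ev_def)
  finally have "poly_mat chi (comp e (coeff chi)) *v axis (phi 0) 1 =
     ev CARD('n) (coeff chi) (comp e (coeff chi)) *v axis (phi 0) 1 + matpow (comp e (coeff chi)) CARD('n) *v axis (phi 0) 1"
    by (simp add: matrix_vector_mult_add_rdistrib)
  also have "\<dots> = (\<chi> i. coeff chi (e i)) + (\<chi> i. - coeff chi (e i))"
    by (simp only: ev_axis pow_axis_N)
  also have "\<dots> = 0" by (simp add: vec_eq_iff)
  finally show ?thesis .
qed

end

section \<open>Values of integer-valued polynomials at matrices over D\<close>

lemma exact_value:
  fixes g :: "'a::idom poly" and A :: "'a^'n^'n"
  assumes H: "\<And>B :: 'a^'n^'n. \<And>i j. d dvd (poly_mat g B $ i $ j)"
  shows "\<exists>t. poly_mat g A = smat d (ev CARD('n) t A)"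
proof -
  define chi where "chi = charpoly A"
  have dchi: "degree chi = CARD('n)" and lchi: "lead_coeff chi = 1"
    using charpoly_monic[of A] unfolding chi_def by auto
  have chi0: "chi \<noteq> 0" using lchi by auto
  obtain q rho where qr: "pseudo_divmod g chi = (q, rho)" by (cases "pseudo_divmod g chi") auto
  have geq: "g = chi * q + rho" using pseudo_divmod(1)[OF chi0 qr] lchi by simp
  have drho: "degree rho < CARD('n)" using pseudo_divmod(2)[OF chi0 qr] dchi by auto
  have gA: "poly_mat g A = poly_mat rho A"
    using cayley_hamilton[of A] by (simp add: geq poly_mat_add poly_mat_mult chi_def)
  obtain e :: "'n \<Rightarrow> nat" where bij: "bij_betw e UNIV {..<CARD('n)}"
    using ex_bij_betw_finite_nat[of "UNIV :: 'n set"] by (auto simp: atLeast0LessThan)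
  define Cm where "Cm = comp e (coeff chi)"
  define u where "u = axis (phi e 0) (1::'a)"
  have "poly_mat g Cm *v u = poly_mat q Cm *v (poly_mat chi Cm *v u) + poly_mat rho Cm *v u"
    by (simp add: geq poly_mat_add poly_mat_mult mult.commute[of chi q] matrix_vector_mult_add_rdistrib
        matrix_vector_mul_assoc)
  also have "\<dots> = (\<chi> i. coeff rho (e i))"
    using char_comp_axis[OF bij dchi lchi] poly_comp_axis[OF bij drho]
    by (simp add: Cm_def u_def)
  finally have gC: "poly_mat g Cm *v u = (\<chi> i. coeff rho (e i))" .
  have dv: "d dvd coeff rho k" if "k < CARD('n)" for k
  proof -
    have "coeff rho k = (poly_mat g Cm *v u) $ (phi e k)" using gC e_phi[OF bij that] by simp
    also have "\<dots> = poly_mat g Cm $ (phi e k) $ (phi e 0)" by (simp add: u_def mult_axis)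
    finally show ?thesis using H by simp
  qed
  define t where "t k = (SOME x. coeff rho k = d * x)" for k
  have dt: "d * t k = coeff rho k" if "k < CARD('n)" for k
  proof -
    have "\<exists>x. coeff rho k = d * x" using dv[OF that] by (auto simp: dvd_def)
    thus ?thesis unfolding t_def by (metis (mono_tags, lifting) someI_ex)
  qed
  have "poly_mat rho A = ev CARD('n) (coeff rho) A" by (rule poly_mat_ev[OF drho])
  also have "\<dots> = ev CARD('n) (\<lambda>k. d * t k) A"
    unfolding ev_def by (intro sum.cong refl) (simp add: dt)
  also have "\<dots> = smat d (ev CARD('n) t A)" by (rule ev_smult)
  finally show ?thesis using gA by (intro exI[of _ t]) simp
qed




definition spanl :: "'a::comm_ring_1 list \<Rightarrow> 'a set" where
  "spanl bs = {x. \<exists>r. x = (\<Sum>i<length bs. r i * bs ! i)}"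

lemma spanl_ideal: "is_ideal (spanl bs)"
  unfolding is_ideal_def spanl_def
proof (intro conjI ballI allI)
  show "0 \<in> {x. \<exists>r. x = (\<Sum>i<length bs. r i * bs ! i)}"
    by (rule CollectI, rule exI[of _ "\<lambda>_. 0"]) simp
next
  fix x y assume "x \<in> {x. \<exists>r. x = (\<Sum>i<length bs. r i * bs ! i)}" "y \<in> {x. \<exists>r. x = (\<Sum>i<length bs. r i * bs ! i)}"
  then obtain r r' where "x = (\<Sum>i<length bs. r i * bs ! i)" "y = (\<Sum>i<length bs. r' i * bs ! i)" by blast
  hence "x + y = (\<Sum>i<length bs. (r i + r' i) * bs ! i)" by (simp add: sum.distrib distrib_right)
  thus "x + y \<in> {x. \<exists>r. x = (\<Sum>i<length bs. r i * bs ! i)}"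
    by (intro CollectI exI[of _ "\<lambda>i. r i + r' i"])
next
  fix s x assume "x \<in> {x. \<exists>r. x = (\<Sum>i<length bs. r i * bs ! i)}"
  then obtain r where "x = (\<Sum>i<length bs. r i * bs ! i)" by blast
  hence "s * x = (\<Sum>i<length bs. (s * r i) * bs ! i)" by (simp add: sum_distrib_left mult.assoc)
  thus "s * x \<in> {x. \<exists>r. x = (\<Sum>i<length bs. r i * bs ! i)}"
    by (intro CollectI exI[of _ "\<lambda>i. s * r i"])
qed

lemma spanl_mono: "spanl bs \<subseteq> spanl (bs @ [y])"
proof
  fix x assume "x \<in> spanl bs"
  then obtain r where r: "x = (\<Sum>i<length bs. r i * bs ! i)" unfolding spanl_def by blast
  define r' where "r' i = (if i < length bs then r i else 0)" for i
  have "(\<Sum>i<length (bs @ [y]). r' i * (bs @ [y]) ! i) = (\<Sum>i<length bs. r' i * (bs @ [y]) ! i)"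
    by (simp add: r'_def)
  also have "\<dots> = x" unfolding r by (intro sum.cong refl) (simp add: r'_def nth_append)
  finally show "x \<in> spanl (bs @ [y])" unfolding spanl_def by (metis (mono_tags, lifting) mem_Collect_eq)
qed

lemma spanl_mem: "(y::'a::comm_ring_1) \<in> spanl (bs @ [y])"
proof -
  define r where "r i = (if i = length bs then 1 else (0::'a))" for i
  have "(\<Sum>i<length (bs @ [y]). r i * (bs @ [y]) ! i) = y"
    by (simp add: r_def)
  thus ?thesis unfolding spanl_def by (metis (mono_tags, lifting) mem_Collect_eq)
qed

lemma noetherian_fg:
  assumes noeth: "noetherian_ring TYPE('a::comm_ring_1)" and I: "is_ideal (I :: 'a set)"
  shows "\<exists>bs. set bs \<subseteq> I \<and> I \<subseteq> spanl bs"
proof (rule ccontr)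
  assume nfg: "\<not> ?thesis"
  define nxt where "nxt l = (SOME x. x \<in> I \<and> x \<notin> spanl l)" for l :: "'a list"
  define L where "L = rec_nat [] (\<lambda>n l. l @ [nxt l])"
  have L0: "L 0 = []" and LS: "L (Suc n) = L n @ [nxt (L n)]" for n by (simp_all add: L_def)
  have nxt: "nxt l \<in> I \<and> nxt l \<notin> spanl l" if "set l \<subseteq> I" for l
  proof -
    have "\<exists>x. x \<in> I \<and> x \<notin> spanl l" using nfg that by blast
    thus ?thesis unfolding nxt_def by (rule someI_ex)
  qed
  have LI: "set (L n) \<subseteq> I" for n
    by (induction n) (simp_all add: L0 LS nxt)
  define J where "J n = spanl (L n)" for n
  have "\<forall>i. is_ideal (J i) \<and> J i \<subseteq> J (Suc i)"
    by (simp add: J_def spanl_ideal LS spanl_mono)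
  with noeth obtain N where N: "\<forall>i\<ge>N. J i = J N" unfolding noetherian_ring_def by blast
  have "nxt (L N) \<in> J (Suc N)" by (simp add: J_def LS spanl_mem)
  moreover have "nxt (L N) \<notin> J N" using nxt[OF LI[of N]] by (simp add: J_def)
  ultimately show False using N[rule_format, of "Suc N"] by simp
qed

section \<open>Finiteness of D / M^k\<close>

lemma finite_reps:
  assumes noeth: "noetherian_ring TYPE('a::comm_ring_1)" and M: "is_ideal (M :: 'a set)"
    and fi: "finite_index M"
  shows "\<exists>R. finite R \<and> (\<forall>x. \<exists>r\<in>R. x - r \<in> ideal_pow M k)"
proof -
  define Cs where "Cs = (\<lambda>x. (\<lambda>m. x + m) ` M) ` UNIV"
  have finCs: "finite Cs" using fi by (simp add: finite_index_def Cs_def)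
  define R1 where "R1 = (\<lambda>c. SOME x. c = (\<lambda>m. x + m) ` M) ` Cs"
  have R1: "finite R1" "\<And>x. \<exists>r\<in>R1. x - r \<in> M"
  proof -
    show "finite R1" using finCs by (simp add: R1_def)
  next
    fix x
    define c where "c = (\<lambda>m. x + m) ` M"
    have cC: "c \<in> Cs" by (simp add: c_def Cs_def)
    define r where "r = (SOME y. c = (\<lambda>m. y + m) ` M)"
    have "c = (\<lambda>m. r + m) ` M" unfolding r_def by (rule someI[of _ x]) (simp add: c_def)
    moreover have "x \<in> c" using ideal_0[OF M] by (force simp: c_def)
    ultimately obtain m where "m \<in> M" "x = r + m" by blast
    hence "x - r \<in> M" by simp
    moreover have "r \<in> R1" using cC by (simp add: R1_def r_def)
    ultimately show "\<exists>r\<in>R1. x - r \<in> M" by blast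
  qed
  show ?thesis
  proof (induction k)
    case 0
    show ?case by (rule exI[of _ "{0}"]) simp
  next
    case (Suc k)
    then obtain R where R: "finite R" "\<And>x. \<exists>r\<in>R. x - r \<in> ideal_pow M k" by blast
    obtain bs where bs: "set bs \<subseteq> ideal_pow M k" "ideal_pow M k \<subseteq> spanl bs"
      using noetherian_fg[OF noeth ideal_pow_ideal[OF M]] by blast
    define m where "m = length bs"
    define R' where "R' = (\<lambda>(r, s). r + (\<Sum>i<m. s i * bs ! i)) ` (R \<times> Pi\<^sub>E {..<m} (\<lambda>_. R1))"
    have "finite R'" unfolding R'_def using R(1) R1(1) by (simp add: finite_PiE)
    moreover have "\<exists>r'\<in>R'. x - r' \<in> ideal_pow M (Suc k)" for x
    proof -
      obtain r where r: "r \<in> R" "x - r \<in> ideal_pow M k" using R(2) by blast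
      then obtain a where a: "x - r = (\<Sum>i<m. a i * bs ! i)" using bs(2) unfolding spanl_def m_def by blast
      define s where "s = restrict (\<lambda>i. SOME y. y \<in> R1 \<and> a i - y \<in> M) {..<m}"
      have s: "s i \<in> R1 \<and> a i - s i \<in> M" if "i < m" for i
      proof -
        have "\<exists>y. y \<in> R1 \<and> a i - y \<in> M" using R1(2) by blast
        from someI_ex[OF this] show ?thesis using that by (simp add: s_def)
      qed
      have sP: "s \<in> Pi\<^sub>E {..<m} (\<lambda>_. R1)" using s by (auto simp: s_def)
      have "x - (r + (\<Sum>i<m. s i * bs ! i)) = (\<Sum>i<m. (a i - s i) * bs ! i)"
        using a by (simp add: algebra_simps sum_subtractf)
      also have "\<dots> \<in> ideal_pow M (Suc k)"
      proof (rule ideal_sum[OF ideal_pow_ideal[OF M]])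
        fix i assume "i \<in> {..<m}"
        hence "a i - s i \<in> M" "bs ! i \<in> ideal_pow M k" using s bs(1) by (auto simp: m_def)
        thus "(a i - s i) * bs ! i \<in> ideal_pow M (Suc k)" by (rule ideal_pow_mult)
      qed
      finally have mem: "x - (r + (\<Sum>i<m. s i * bs ! i)) \<in> ideal_pow M (Suc k)" .
      have "r + (\<Sum>i<m. s i * bs ! i) \<in> R'" unfolding R'_def using r(1) sP by force
      thus ?thesis using mem by blast
    qed
    ultimately show ?case by blast
  qed
qed




lemma to_fract_sum: "to_fract (sum f S) = (\<Sum>x\<in>S. to_fract (f x))"
  by (induction S rule: infinite_finite_induct) simp_all

definition tfm :: "'a::idom^'n^'n \<Rightarrow> 'a fract^'n^'n" where
  "tfm B = (\<chi> i j. to_fract (B $ i $ j))"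

lemma tfm_mult: "tfm (A ** B) = tfm A ** tfm B"
  by (simp add: vec_eq_iff tfm_def matrix_matrix_mult_def to_fract_sum)

lemma tfm_one: "tfm (mat 1 :: 'a::idom^'n^'n) = mat 1"
  by (simp add: vec_eq_iff tfm_def mat_def)

lemma tfm_matpow: "matpow (tfm B) j = tfm (matpow B j)"
  by (induction j) (simp_all add: tfm_one tfm_mult)

lemma tfm_poly_mat: "poly_mat (map_poly to_fract g) (tfm B) = tfm (poly_mat g B)"
proof -
  define m where "m = Suc (degree g)"
  have d1: "degree (map_poly to_fract g) < m" by (subst degree_map_poly) (simp_all add: m_def)
  have d2: "degree g < m" by (simp add: m_def)
  show ?thesis
    unfolding poly_mat_ev[OF d1] poly_mat_ev[OF d2] ev_def
    by (simp add: vec_eq_iff tfm_def coeff_map_poly to_fract_sum tfm_matpow[unfolded tfm_def])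
qed

lemma int_dvd:
  fixes g :: "'a::idom poly"
  assumes f: "f \<in> (Int_K_Mn TYPE('n) :: 'a fract poly set)" and d: "d \<noteq> 0"
    and fe: "f = smult (inverse (to_fract d)) (map_poly to_fract g)"
  shows "d dvd (poly_mat g (B :: 'a^'n^'n) $ i $ j)"
proof -
  have "poly_mat f (\<chi> i j. to_fract (B $ i $ j)) $ i $ j \<in> range to_fract"
    using f unfolding Int_K_Mn_def by blast
  also have "poly_mat f (\<chi> i j. to_fract (B $ i $ j)) $ i $ j =
      inverse (to_fract d) * to_fract (poly_mat g B $ i $ j)"
    using tfm_poly_mat[of g B] by (simp add: fe poly_mat_smult tfm_def[symmetric]) (simp add: tfm_def)
  finally obtain z where z: "inverse (to_fract d) * to_fract (poly_mat g B $ i $ j) = to_fract z" by blast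
  have "to_fract (poly_mat g B $ i $ j) = to_fract d * to_fract z"
    using z d by (simp add: field_simps)
  hence "poly_mat g B $ i $ j = d * z" by (simp only: to_fract_mult[symmetric] to_fract_eq_iff)
  thus ?thesis by simp
qed


definition congt :: "nat \<Rightarrow> 'a::comm_ring_1 set \<Rightarrow> (nat \<Rightarrow> 'a) \<Rightarrow> (nat \<Rightarrow> 'a) \<Rightarrow> bool" where
  "congt n I s t \<longleftrightarrow> (\<forall>j<n. s j - t j \<in> I)"

lemma main_construction:
  fixes M :: "'a::idom set" and C :: "nat \<Rightarrow> 'a^'n^'n" and g :: "'a poly"
  assumes noeth: "noetherian_ring TYPE('a)" and Mi: "is_ideal M" and fi: "finite_index M"
    and hC: "hat_mat M C"
    and H: "\<And>B :: 'a^'n^'n. \<And>i j. d dvd (poly_mat g B $ i $ j)"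
  shows "frac_val_in_hat_alg M g d C"
proof -
  let ?N = "CARD('n)"
  let ?I = "ideal_pow M"
  have Ii: "is_ideal (?I k)" for k by (rule ideal_pow_ideal[OF Mi])
  define P where "P k t \<longleftrightarrow> cong_mat (?I k) (poly_mat g (C k)) (smat d (ev ?N t (C k)))" for k t
  define rr where "rr K = (SOME t. poly_mat g (C K) = smat d (ev ?N t (C K)))" for K
  have rr: "poly_mat g (C K) = smat d (ev ?N (rr K) (C K))" for K
  proof -
    have "\<exists>t. poly_mat g (C K) = smat d (ev ?N t (C K))" by (rule exact_value[OF H])
    thus ?thesis unfolding rr_def by (rule someI_ex)
  qed
  have Ccong: "cong_mat (?I k) (C K) (C k)" if "k \<le> K" for k K
    using that
  proof (induction K rule: dec_induct)
    case base thus ?case by (rule cong_mat_refl[OF Ii])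
  next
    case (step K)
    have "cong_mat (?I K) (C (Suc K)) (C K)"
      using hC unfolding hat_mat_def hat_elem_def cong_mat_def by blast
    hence "cong_mat (?I k) (C (Suc K)) (C K)"
      using ideal_pow_mono[OF Mi step(1)] unfolding cong_mat_def by blast
    thus ?case using step(3) by (rule cong_mat_trans[OF Ii])
  qed
  have Prr: "P k (rr K)" if "k \<le> K" for k K
  proof -
    have "cong_mat (?I k) (poly_mat g (C k)) (poly_mat g (C K))"
      by (rule cong_mat_sym[OF Ii], rule cong_mat_poly_mat[OF Ii], rule Ccong[OF that])
    also have "poly_mat g (C K) = smat d (ev ?N (rr K) (C K))" by (rule rr)
    finally have c1: "cong_mat (?I k) (poly_mat g (C k)) (smat d (ev ?N (rr K) (C K)))" .
    have "cong_mat (?I k) (smat d (ev ?N (rr K) (C K))) (smat d (ev ?N (rr K) (C k)))"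
      by (rule cong_mat_smat[OF Ii], rule cong_mat_ev[OF Ii], rule Ccong[OF that])
    with c1 show ?thesis unfolding P_def by (rule cong_mat_trans[OF Ii])
  qed
  have Pcong: "P k s" if "P k t" "congt ?N (?I k) t s" for k s t
  proof -
    have "cong_mat (?I k) (smat d (ev ?N t (C k))) (smat d (ev ?N s (C k)))"
      by (rule cong_mat_smat[OF Ii], rule cong_mat_ev_coef[OF Ii]) (use that(2) in \<open>simp add: congt_def\<close>)
    with that(1) show ?thesis unfolding P_def by (rule cong_mat_trans[OF Ii])
  qed
  define E where "E k s \<longleftrightarrow> infinite {K. congt ?N (?I k) (rr K) s}" for k s
  have EP: "P k s" if "E k s" for k s
  proof -
    from that obtain K where K: "K \<ge> k" "congt ?N (?I k) (rr K) s"
      unfolding E_def infinite_nat_iff_unbounded_le by blast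
    show ?thesis by (rule Pcong[OF Prr[OF K(1)] K(2)])
  qed
  have Estep: "\<exists>s'. congt ?N (?I k) s' s \<and> E (Suc k) s'" if "E k s" for k s
  proof -
    obtain R where R: "finite R" "\<And>x. \<exists>r\<in>R. x - r \<in> ?I (Suc k)"
      using finite_reps[OF noeth Mi fi, of "Suc k"] by blast
    define T where "T = Pi\<^sub>E {..<?N} (\<lambda>_. R)"
    have finT: "finite T" unfolding T_def using R(1) by (simp add: finite_PiE)
    define S where "S = {K. congt ?N (?I k) (rr K) s}"
    have infS: "infinite S" using that by (simp add: E_def S_def)
    define X where "X t = {K\<in>S. congt ?N (?I (Suc k)) (rr K) t}" for t
    have cov: "S \<subseteq> (\<Union>t\<in>T. X t)"
    proof
      fix K assume KS: "K \<in> S"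
      define t where "t = restrict (\<lambda>j. SOME r. r \<in> R \<and> rr K j - r \<in> ?I (Suc k)) {..<?N}"
      have t: "t j \<in> R \<and> rr K j - t j \<in> ?I (Suc k)" if "j < ?N" for j
      proof -
        have "\<exists>r. r \<in> R \<and> rr K j - r \<in> ?I (Suc k)" using R(2) by blast
        from someI_ex[OF this] show ?thesis using that by (simp add: t_def)
      qed
      have "t \<in> T" using t by (auto simp: T_def t_def)
      moreover have "K \<in> X t" using KS t by (simp add: X_def congt_def)
      ultimately show "K \<in> (\<Union>t\<in>T. X t)" by blast
    qed
    obtain t where tT: "t \<in> T" and infX: "infinite (X t)"
    proof (rule ccontr)
      assume "\<not> thesis"
      hence "\<forall>t\<in>T. finite (X t)" using that by blast
      hence "finite (\<Union>t\<in>T. X t)" using finT by blast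
      hence "finite S" using cov by (rule finite_subset[rotated])
      thus False using infS by simp
    qed
    obtain K where K: "K \<in> X t" using infX by (metis finite.emptyI ex_in_conv)
    have "congt ?N (?I k) t s"
      unfolding congt_def
    proof (intro allI impI)
      fix j assume j: "j < ?N"
      have a: "rr K j - t j \<in> ?I k"
        using K j ideal_pow_Suc_sub[OF Mi, of k] by (auto simp: X_def congt_def)
      have b: "rr K j - s j \<in> ?I k" using K j by (simp add: X_def S_def congt_def)
      have "(rr K j - s j) - (rr K j - t j) \<in> ?I k" by (rule ideal_diff[OF Ii b a])
      thus "t j - s j \<in> ?I k" by simp
    qed
    moreover have "E (Suc k) t"
      unfolding E_def
    proof
      assume "finite {K. congt ?N (?I (Suc k)) (rr K) t}"
      moreover have "X t \<subseteq> {K. congt ?N (?I (Suc k)) (rr K) t}" by (auto simp: X_def)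
      ultimately have "finite (X t)" by (rule finite_subset[rotated])
      thus False using infX by simp
    qed
    ultimately show ?thesis by blast
  qed
  define sq where "sq = rec_nat (\<lambda>_. 0) (\<lambda>k s. SOME s'. congt ?N (?I k) s' s \<and> E (Suc k) s')"
  have sq0: "sq 0 = (\<lambda>_. 0)" and sqS: "sq (Suc k) = (SOME s'. congt ?N (?I k) s' (sq k) \<and> E (Suc k) s')" for k
    by (simp_all add: sq_def)
  have Esq: "E k (sq k) \<and> congt ?N (?I k) (sq (Suc k)) (sq k)" for k
  proof (induction k)
    case 0
    have E0: "E 0 (sq 0)" by (simp add: E_def congt_def)
    from someI_ex[OF Estep[OF E0]] show ?case using E0 by (simp add: sqS)
  next
    case (Suc k)
    hence E1: "E (Suc k) (sq (Suc k))" using someI_ex[OF Estep[of k "sq k"]] by (simp add: sqS)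
    from someI_ex[OF Estep[OF E1]] show ?case using E1 by (simp add: sqS[of "Suc k"])
  qed
  define cs where "cs = map (\<lambda>j k. sq k j) [0..<?N]"
  have "\<forall>c\<in>set cs. hat_elem M c"
    using Esq by (auto simp: cs_def hat_elem_def congt_def)
  moreover have "hat_mat_eq M (D_poly_hat_mat g C) (scal_hat_mat d (hat_poly_mat cs C))"
  proof -
    have hp: "hat_poly_mat cs C k = ev ?N (sq k) (C k)" for k
      by (simp add: hat_poly_mat_def cs_def ev_def)
    have "P k (sq k)" for k using EP Esq by blast
    thus ?thesis
      by (simp add: hat_mat_eq_def D_poly_hat_mat_def scal_hat_mat_def hp P_def cong_mat_def)
  qed
  ultimately show ?thesis unfolding frac_val_in_hat_alg_def by blast
qed


theorem mainTheorem6: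
  fixes M :: "'a::idom set" and C :: "nat \<Rightarrow> 'a^'n^'n"
  assumes "dedekind_domain TYPE('a)"
    and "is_maximal_ideal M"
    and "finite_index M"
    and "hat_mat M C"
  shows "\<forall>f \<in> (Int_K_Mn TYPE('n) :: 'a fract poly set). \<forall>(g :: 'a poly) (d :: 'a).
           d \<noteq> 0 \<and> f = smult (inverse (to_fract d)) (map_poly to_fract g)
           \<longrightarrow> frac_val_in_hat_alg M g d C"
proof (intro ballI allI impI)
  fix f :: "'a fract poly" and g :: "'a poly" and d :: 'a
  assume f: "f \<in> Int_K_Mn TYPE('n)" and fd: "d \<noteq> 0 \<and> f = smult (inverse (to_fract d)) (map_poly to_fract g)"
  have noeth: "noetherian_ring TYPE('a)" using assms(1) by (simp add: dedekind_domain_def)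
  have Mi: "is_ideal M" using assms(2) by (simp add: is_maximal_ideal_def)
  show "frac_val_in_hat_alg M g d C"
  proof (rule main_construction[OF noeth Mi assms(3) assms(4)])
    fix B :: "'a^'n^'n" and i j
    show "d dvd poly_mat g B $ i $ j" using int_dvd[OF f] fd by blast
  qed
qed

end
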